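(* For the Byzantine-tolerant algorithm described in the context, under the fair distributed daemon and any Byzantine behaviour: if $\gamma$ is a degree-stabilized configuration such that $I_\gamma$ is not a maximal independent set of the subgraph induced by $V_2\cup I_\gamma$, then within the round starting at $\gamma$ at least one of the following happens: (1) the rule Candidacy? is executed on a node of $V_1$; (2) a configuration $\gamma'$ with $I_\gamma\subsetneq I_{\gamma'}$ is reached; (3) a configuration $\gamma'$ in which Candidacy? is enabled on some node of $V_2$ is reached.
   Context: Network and model. $G=(V,E)$ is a finite simple undirected graph; $N(u)$ is the open neighbourhood of $u$, $N[u]=N(u)\cup\{u\}$, $\deg(u)=|N(u)|$. Nodes are anonymous. Each node holds local variables; a configuration is an assignment of values to all local variables. A rule "guard $\to$ command" is enabled on $u$ in $\gamma$ if its guard (a predicate on the variables of $u$ and its neighbours) holds; its command rewrites only $u$'s variables, possibly randomly. $u$ is activable if some rule is enabled on it. A transition $\gamma\xrightarrow{t}\gamma'$ is given by a nonempty set $t$ of moves $(u,r)$ with $r$ enabled on $u$ in $\gamma$, at most one per node, all executed simultaneously from the values in $\gamma$. An execution is a sequence of consecutive transitions chosen by a daemon. The fair distributed daemon may choose any such $t$, subject to fairness: no node may remain activable forever without being activated. Rounds. The rounds of an execution are consecutive segments of transitions: the first round starts at the beginning of the execution, each subsequent round starts immediately after the previous one ends, and the current round ends as soon as every node $u\in V$ has either been activated in at least one transition of the round or been non-activable in at least one configuration of the round. Byzantine nodes. A subset $B\subseteq V$ consists of Byzantine nodes: always activable and, when activated, they may set their variables to arbitrary values. $d(u,B)$ is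 the graph distance from $u$ to $B$ and $V_i=\{u\in V: d(u,B)>i\}$. Algorithm. Each node $u$ has variables $s_u\in\{\bot,\top\}$ and $x_u\in\mathbb{N}$; $Rand(q)$ returns $1$ with probability $q$, else $0$. Non-Byzantine nodes follow the rules: (Refresh) $x_u\neq \deg(u)\ \to\ x_u:=\deg(u)$. (Candidacy?) $x_u=\deg(u)\wedge s_u=\bot\wedge \forall v\in N(u),\ s_v=\bot\ \to$ if $Rand\big(\frac{1}{1+\max\{x_v: v\in N[u]\}}\big)=1$ then $s_u:=\top$. (Withdrawal) $x_u=\deg(u)\wedge s_u=\top\wedge \exists v\in N(u),\ s_v=\top\ \to\ s_u:=\bot$. For a configuration $\gamma$, $I_\gamma=\{u\in V_1: s_u^\gamma=\top \text{ and } \forall v\in N(u),\ s_v^\gamma=\bot\}$. $\gamma$ is degree-stabilized if $x_u^\gamma=\deg(u)$ for every non-Byzantine node $u$. *)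

theory Defs
  imports Complex_Main
begin

definition simple_graph :: "'v set \<Rightarrow> ('v \<Rightarrow> 'v \<Rightarrow> bool) \<Rightarrow> bool" where
  "simple_graph V E \<longleftrightarrow> finite V \<and> (\<forall>u v. E u v \<longrightarrow> u \<in> V \<and> v \<in> V)
     \<and> (\<forall>u v. E u v \<longrightarrow> E v u) \<and> (\<forall>u. \<not> E u u)"

definition nbrs :: "('v \<Rightarrow> 'v \<Rightarrow> bool) \<Rightarrow> 'v \<Rightarrow> 'v set" where
  "nbrs E u = {v. E u v}"

definition deg :: "('v \<Rightarrow> 'v \<Rightarrow> bool) \<Rightarrow> 'v \<Rightarrow> nat" where
  "deg E u = card (nbrs E u)"

definition edge_rel :: "('v \<Rightarrow> 'v \<Rightarrow> bool) \<Rightarrow> ('v \<times> 'v) set" where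
  "edge_rel E = {(u, v). E u v}"

(* V_i = { u in V : d(u,B) > i }, i.e. no Byzantine node at distance \<le> i *)
definition Vdist :: "'v set \<Rightarrow> ('v \<Rightarrow> 'v \<Rightarrow> bool) \<Rightarrow> 'v set \<Rightarrow> nat \<Rightarrow> 'v set" where
  "Vdist V E B i = {u \<in> V. \<forall>b\<in>B. \<forall>j\<le>i. (u, b) \<notin> (edge_rel E) ^^ j}"

definition independent :: "('v \<Rightarrow> 'v \<Rightarrow> bool) \<Rightarrow> 'v set \<Rightarrow> bool" where
  "independent E I \<longleftrightarrow> (\<forall>u\<in>I. \<forall>v\<in>I. \<not> E u v)"

definition maximal_independent_set :: "('v \<Rightarrow> 'v \<Rightarrow> bool) \<Rightarrow> 'v set \<Rightarrow> 'v set \<Rightarrow> bool" where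
  "maximal_independent_set E S I \<longleftrightarrow> I \<subseteq> S \<and> independent E I
     \<and> (\<forall>J. I \<subset> J \<and> J \<subseteq> S \<longrightarrow> \<not> independent E J)"

(* s_u = True means top, False means bottom *)
record 'v config =
  sv :: "'v \<Rightarrow> bool"
  xv :: "'v \<Rightarrow> nat"

datatype rule = Refresh | Candidacy | Withdrawal | ByzMove

definition enabled :: "('v \<Rightarrow> 'v \<Rightarrow> bool) \<Rightarrow> 'v set \<Rightarrow> 'v config \<Rightarrow> 'v \<Rightarrow> rule \<Rightarrow> bool" where
  "enabled E B c u r =
    (if u \<in> B then r = ByzMove else
     (case r of
        Refresh \<Rightarrow> xv c u \<noteq> deg E u
      | Candidacy \<Rightarrow> xv c u = deg E u \<and> \<not> sv c u \<and> (\<forall>v. E u v \<longrightarrow> \<not> sv c v)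
      | Withdrawal \<Rightarrow> xv c u = deg E u \<and> sv c u \<and> (\<exists>v. E u v \<and> sv c v)
      | ByzMove \<Rightarrow> False))"

definition activable :: "('v \<Rightarrow> 'v \<Rightarrow> bool) \<Rightarrow> 'v set \<Rightarrow> 'v config \<Rightarrow> 'v \<Rightarrow> bool" where
  "activable E B c u \<longleftrightarrow> (\<exists>r. enabled E B c u r)"

(* success probability of Rand in Candidacy? *)
definition cand_prob :: "('v \<Rightarrow> 'v \<Rightarrow> bool) \<Rightarrow> 'v config \<Rightarrow> 'v \<Rightarrow> real" where
  "cand_prob E c u = 1 / (1 + real (Max (xv c ` insert u (nbrs E u))))"

(* one transition c --T--> c'. The random outcome of Candidacy? is modelled by
   allowing every outcome of positive probability. *)
definition step :: "'v set \<Rightarrow> ('v \<Rightarrow> 'v \<Rightarrow> bool) \<Rightarrow> 'v set \<Rightarrow> 'v config \<Rightarrow> ('v \<times> rule) set \<Rightarrow> 'v config \<Rightarrow> bool" where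
  "step V E B c T c' \<longleftrightarrow>
     T \<noteq> {} \<and>
     (\<forall>(u, r)\<in>T. u \<in> V \<and> enabled E B c u r) \<and>
     (\<forall>u r r'. (u, r) \<in> T \<and> (u, r') \<in> T \<longrightarrow> r = r') \<and>
     (\<forall>u. (\<forall>r. (u, r) \<notin> T) \<longrightarrow> sv c' u = sv c u \<and> xv c' u = xv c u) \<and>
     (\<forall>u. (u, Refresh) \<in> T \<longrightarrow> xv c' u = deg E u \<and> sv c' u = sv c u) \<and>
     (\<forall>u. (u, Candidacy) \<in> T \<longrightarrow> xv c' u = xv c u \<and>
            (sv c' u \<or> (\<not> sv c' u \<and> cand_prob E c u < 1))) \<and>
     (\<forall>u. (u, Withdrawal) \<in> T \<longrightarrow> xv c' u = xv c u \<and> \<not> sv c' u)"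

definition round_complete :: "'v set \<Rightarrow> ('v \<Rightarrow> 'v \<Rightarrow> bool) \<Rightarrow> 'v set \<Rightarrow> (nat \<Rightarrow> 'v config) \<Rightarrow> (nat \<Rightarrow> ('v \<times> rule) set) \<Rightarrow> nat \<Rightarrow> bool" where
  "round_complete V E B c T n \<longleftrightarrow>
     (\<forall>u\<in>V. (\<exists>i<n. \<exists>r. (u, r) \<in> T i) \<or> (\<exists>i\<le>n. \<not> activable E B (c i) u))"

(* the first round consists exactly of transitions 0..n-1 *)
definition first_round_ends_at :: "'v set \<Rightarrow> ('v \<Rightarrow> 'v \<Rightarrow> bool) \<Rightarrow> 'v set \<Rightarrow> (nat \<Rightarrow> 'v config) \<Rightarrow> (nat \<Rightarrow> ('v \<times> rule) set) \<Rightarrow> nat \<Rightarrow> bool" where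
  "first_round_ends_at V E B c T n \<longleftrightarrow>
     round_complete V E B c T n \<and> (\<forall>m<n. \<not> round_complete V E B c T m)"

definition degree_stabilized :: "'v set \<Rightarrow> ('v \<Rightarrow> 'v \<Rightarrow> bool) \<Rightarrow> 'v set \<Rightarrow> 'v config \<Rightarrow> bool" where
  "degree_stabilized V E B c \<longleftrightarrow> (\<forall>u\<in>V - B. xv c u = deg E u)"

definition Iset :: "'v set \<Rightarrow> ('v \<Rightarrow> 'v \<Rightarrow> bool) \<Rightarrow> 'v set \<Rightarrow> 'v config \<Rightarrow> 'v set" where
  "Iset V E B c = {u \<in> Vdist V E B 1. sv c u \<and> (\<forall>v. E u v \<longrightarrow> \<not> sv c v)}"

end

theory Submission
  imports Defs
begin

lemma V2_V1: "u \<in> Vdist V E B 2 \<Longrightarrow> u \<in> Vdist V E B 1"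
  unfolding Vdist_def by auto

lemma V1_notB: "u \<in> Vdist V E B 1 \<Longrightarrow> u \<notin> B"
  unfolding Vdist_def by fastforce

lemma V1_nbr_notB: "u \<in> Vdist V E B 1 \<Longrightarrow> E u v \<Longrightarrow> v \<notin> B"
proof
  assume u: "u \<in> Vdist V E B 1" and e: "E u v" and vb: "v \<in> B"
  have "(u, v) \<in> (edge_rel E) ^^ 1" using e by (simp add: edge_rel_def)
  with u vb show False unfolding Vdist_def by blast
qed

lemma V2_nbr_V1:
  assumes g: "simple_graph V E" and u: "u \<in> Vdist V E B 2" and e: "E u v"
  shows "v \<in> Vdist V E B 1"
proof -
  have vV: "v \<in> V" using g e unfolding simple_graph_def by blast
  have "\<forall>b\<in>B. \<forall>j\<le>1. (v, b) \<notin> (edge_rel E) ^^ j"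
  proof (intro ballI allI impI)
    fix b j assume b: "b \<in> B" and j: "j \<le> (1::nat)"
    show "(v, b) \<notin> (edge_rel E) ^^ j"
    proof
      assume "(v, b) \<in> (edge_rel E) ^^ j"
      moreover have "(u, v) \<in> edge_rel E" using e by (simp add: edge_rel_def)
      ultimately have "(u, b) \<in> (edge_rel E) ^^ Suc j" by (metis relpow_Suc_I2)
      moreover have "Suc j \<le> 2" using j by simp
      ultimately show False using u b unfolding Vdist_def by blast
    qed
  qed
  thus ?thesis using vV unfolding Vdist_def by blast
qed

lemma step_sv:
  assumes "step V E B c T c'" "u \<notin> B" "sv c' u \<noteq> sv c u"
  shows "((u,Candidacy)\<in>T \<and> enabled E B c u Candidacy) \<or> ((u,Withdrawal)\<in>T \<and> enabled E B c u Withdrawal \<and> \<not> sv c' u)"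
proof (cases "\<exists>r. (u,r) \<in> T")
  case True
  then obtain r where r: "(u,r) \<in> T" by blast
  then have en: "enabled E B c u r" using assms(1) unfolding step_def by blast
  show ?thesis
  proof (cases r)
    case Refresh then show ?thesis using assms r unfolding step_def by auto
  next
    case Candidacy then show ?thesis using en r by auto
  next
    case Withdrawal then show ?thesis using en r assms(1) unfolding step_def by auto
  next
    case ByzMove then show ?thesis using en assms(2) unfolding enabled_def by auto
  qed
next
  case False then show ?thesis using assms unfolding step_def by auto
qed

lemma step_xv:
  assumes "step V E B c T c'" "u \<notin> B" "xv c u = deg E u"
  shows "xv c' u = deg E u"
proof (cases "\<exists>r. (u,r) \<in> T")
  case True
  then obtain r where r: "(u,r) \<in> T" by blast
  then have en: "enabled E B c u r" using assms(1) unfolding step_def by blast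
  show ?thesis
  proof (cases r)
    case ByzMove then show ?thesis using en assms(2) unfolding enabled_def by auto
  qed (use assms r in \<open>auto simp: step_def\<close>)
next
  case False then show ?thesis using assms unfolding step_def by auto
qed

lemma step_I:
  assumes g: "simple_graph V E" and st: "step V E B c T c'" and x: "x \<in> Iset V E B c"
  shows "x \<in> Iset V E B c'"
proof -
  have x1: "x \<in> Vdist V E B 1" and sx: "sv c x" and nx: "\<forall>v. E x v \<longrightarrow> \<not> sv c v"
    using x unfolding Iset_def by auto
  have "sv c' x"
  proof (rule ccontr)
    assume "\<not> sv c' x"
    then have "sv c' x \<noteq> sv c x" using sx by simp
    from step_sv[OF st V1_notB[OF x1] this] show False
      using sx nx unfolding enabled_def using V1_notB[OF x1] by auto
  qed
  moreover have "\<not> sv c' v" if e: "E x v" for v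
  proof
    assume s': "sv c' v"
    have vB: "v \<notin> B" using V1_nbr_notB[OF x1 e] .
    have ev: "E v x" using g e unfolding simple_graph_def by blast
    have "sv c' v \<noteq> sv c v" using s' nx e by auto
    from step_sv[OF st vB this] show False
      using sx nx e ev vB s' unfolding enabled_def by auto
  qed
  ultimately show ?thesis using x1 unfolding Iset_def by auto
qed

theorem mainTheorem9:
  fixes V :: "'v set" and E :: "'v \<Rightarrow> 'v \<Rightarrow> bool" and B :: "'v set"
    and c :: "nat \<Rightarrow> 'v config" and T :: "nat \<Rightarrow> ('v \<times> rule) set" and n :: nat
  assumes "simple_graph V E"
    and "B \<subseteq> V"
    and "\<forall>i<n. step V E B (c i) (T i) (c (Suc i))"
    and "first_round_ends_at V E B c T n"
    and "degree_stabilized V E B (c 0)"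
    and "\<not> maximal_independent_set E (Vdist V E B 2 \<union> Iset V E B (c 0)) (Iset V E B (c 0))"
  shows "(\<exists>i<n. \<exists>u\<in>Vdist V E B 1. (u, Candidacy) \<in> T i)
       \<or> (\<exists>i\<le>n. Iset V E B (c 0) \<subset> Iset V E B (c i))
       \<or> (\<exists>i\<le>n. \<exists>u\<in>Vdist V E B 2. enabled E B (c i) u Candidacy)"
proof (rule ccontr)
  assume H: "\<not> ?thesis"
  note g = assms(1) and st = assms(3)
  let ?I = "Iset V E B (c 0)"
  have n1: "\<forall>i<n. \<forall>u\<in>Vdist V E B 1. (u, Candidacy) \<notin> T i" using H by blast
  have n3: "\<forall>i\<le>n. \<forall>u\<in>Vdist V E B 2. \<not> enabled E B (c i) u Candidacy" using H by blast
  have xvs: "\<forall>u\<in>V - B. xv (c i) u = deg E u" if "i \<le> n" for i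
    using that
  proof (induction i)
    case 0 then show ?case using assms(5) unfolding degree_stabilized_def by simp
  next
    case (Suc i)
    then show ?case using step_xv st by (metis DiffD2 Suc_le_lessD less_or_eq_imp_le)
  qed
  have Imono: "?I \<subseteq> Iset V E B (c i)" if "i \<le> n" for i
    using that
  proof (induction i)
    case (Suc i)
    then show ?case using step_I[OF g] st by (meson Suc_le_lessD less_or_eq_imp_le subset_iff)
  qed simp
  have Ieq: "Iset V E B (c i) = ?I" if "i \<le> n" for i
    using Imono[OF that] H that by blast
  have indI: "independent E ?I" unfolding independent_def Iset_def by auto
  obtain J where J: "?I \<subset> J" "J \<subseteq> Vdist V E B 2 \<union> ?I" "independent E J"
    using assms(6) indI unfolding maximal_independent_set_def by blast
  obtain w where w: "w \<in> J" "w \<notin> ?I" using J(1) by blast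
  have w2: "w \<in> Vdist V E B 2" using w J(2) by blast
  have w1: "w \<in> Vdist V E B 1" using V2_V1[OF w2] .
  have wV: "w \<in> V" using w2 unfolding Vdist_def by blast
  have wnI: "\<not> E w x" if "x \<in> ?I" for x using J that w unfolding independent_def by blast
  have mono: "sv (c i) x" if x1: "x \<in> Vdist V E B 1" and sn: "sv (c n) x" and i: "i \<le> n" for x i
  proof -
    have "\<forall>k. k \<le> n \<longrightarrow> sv (c (n - k)) x"
    proof (intro allI)
      fix k show "k \<le> n \<longrightarrow> sv (c (n - k)) x"
      proof (induction k)
        case 0 then show ?case using sn by simp
      next
        case (Suc k)
        show ?case
        proof
          assume k: "Suc k \<le> n"
          then have s: "sv (c (Suc (n - Suc k))) x" using Suc by (simp add: Suc_diff_Suc)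
          have lt: "n - Suc k < n" using k by simp
          show "sv (c (n - Suc k)) x"
          proof (rule ccontr)
            assume "\<not> sv (c (n - Suc k)) x"
            then have "sv (c (Suc (n - Suc k))) x \<noteq> sv (c (n - Suc k)) x" using s by simp
            from step_sv[OF st[rule_format, OF lt] V1_notB[OF x1] this]
            show False using n1 lt x1 s by blast
          qed
        qed
      qed
    qed
    then show ?thesis using i by (metis diff_diff_cancel diff_le_self)
  qed
  have wB: "w \<notin> B" using V1_notB[OF w1] .
  have "\<not> enabled E B (c n) w Candidacy" using n3 w2 by blast
  then have "sv (c n) w \<or> (\<exists>v. E w v \<and> sv (c n) v)"
    using xvs[of n] wB wV unfolding enabled_def by auto
  then obtain x where x: "x = w \<or> E w x" "sv (c n) x" by blast
  have x1: "x \<in> Vdist V E B 1" using x(1) w1 V2_nbr_V1[OF g w2] by blast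
  have xB: "x \<notin> B" using V1_notB[OF x1] .
  have xV: "x \<in> V" using x1 unfolding Vdist_def by blast
  have xs: "sv (c i) x" if "i \<le> n" for i using mono[OF x1 x(2) that] .
  have rc: "round_complete V E B c T n" using assms(4) unfolding first_round_ends_at_def by blast
  have "x \<in> ?I"
  proof -
    have "(\<exists>i<n. \<exists>r. (x, r) \<in> T i) \<or> (\<exists>i\<le>n. \<not> activable E B (c i) x)"
      using rc xV unfolding round_complete_def by blast
    then show ?thesis
    proof
      assume "\<exists>i<n. \<exists>r. (x, r) \<in> T i"
      then obtain i r where i: "i < n" and r: "(x,r) \<in> T i" by blast
      have sti: "step V E B (c i) (T i) (c (Suc i))" using st i by blast
      have en: "enabled E B (c i) x r" using sti r unfolding step_def by blast
      have xd: "xv (c i) x = deg E x" using xvs[of i] i xV xB by simp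
      have s1: "sv (c i) x" "sv (c (Suc i)) x" using xs i by auto
      show ?thesis
      proof (cases r)
        case Withdrawal then show ?thesis using sti r s1 unfolding step_def by auto
      qed (use en xB xd s1 in \<open>auto simp: enabled_def\<close>)
    next
      assume "\<exists>i\<le>n. \<not> activable E B (c i) x"
      then obtain i where i: "i \<le> n" and na: "\<not> activable E B (c i) x" by blast
      have xd: "xv (c i) x = deg E x" using xvs[of i] i xV xB by simp
      have "\<not> enabled E B (c i) x Withdrawal" using na unfolding activable_def by blast
      then have "\<forall>v. E x v \<longrightarrow> \<not> sv (c i) v" using xd xs[OF i] xB unfolding enabled_def by auto
      then have "x \<in> Iset V E B (c i)" using x1 xs[OF i] unfolding Iset_def by auto
      then show ?thesis using Ieq[OF i] by simp
    qed
  qed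
  then show False using x(1) w(2) wnI by blast
qed

end
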